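(* Under the standing assumptions (A1)–(A2) below, for every $\varepsilon>0$ there exist $R_2^{\varepsilon}>0$ and $c_7^{\varepsilon}>0$ such that for all $\mathbf{x}\in\mathbb{R}^n$ with $|\mathbf{x}|>R_2^{\varepsilon}$ one has $\mathbf{F}^{\varepsilon}(\mathbf{x})\neq0$ and \[ \Big\langle \mathbf{F}^{\varepsilon}(\mathbf{x}),\tfrac{\mathbf{x}}{|\mathbf{x}|}\Big\rangle<-c_7^{\varepsilon}\,|\mathbf{F}^{\varepsilon}(\mathbf{x})|. \]
   Context: Write points of $\mathbb{R}^n$ as $\mathbf{x}=(x,\mathbf{y})$ with $x\in\mathbb{R}$, $\mathbf{y}\in\mathbb{R}^{n-1}$; $|\cdot|$ is the Euclidean norm and $\langle\cdot,\cdot\rangle$ the Euclidean inner product. Let $\mathbf{F}^{\pm}:\mathbb{R}^n\to\mathbb{R}^n$ be smooth vector fields and define the piecewise-smooth field $\mathbf{F}(\mathbf{x})=\mathbf{F}^+(\mathbf{x})$ if $x>0$, $\mathbf{F}(\mathbf{x})=\mathbf{F}^-(\mathbf{x})$ if $x<0$. Standing assumptions: (A1) (growth) There exist $1<p<\infty$, $R_1,c_1,c_3,c_5>0$ and $c_2,c_4,c_6\in\mathbb{R}$ with $c_5<c_1$ such that for $|\mathbf{x}|>R_1$: $|\mathbf{F}^-(\mathbf{x})|\ge c_1|\mathbf{x}|^p+c_2$ if $x<0$ and $|\mathbf{F}^+(\mathbf{x})|\ge c_1|\mathbf{x}|^p+c_2$ if $x>0$; $|\partial_x\mathbf{F}^-(\mathbf{x})|\le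 c_3|\mathbf{x}|^p+c_4$ if $x<0$ and $|\partial_x\mathbf{F}^+(\mathbf{x})|\le c_3|\mathbf{x}|^p+c_4$ if $x>0$; and $|\mathbf{F}^+(0,\mathbf{y})-\mathbf{F}^-(0,\mathbf{y})|\le c_5|\mathbf{y}|^p+c_6$. (A2) (asymptotically inward-flowing) There exist $R_2,c_7>0$ such that $|\mathbf{x}|>R_2$ implies $\mathbf{F}^{\pm}(\mathbf{x})\neq0$ and $\langle\mathbf{F}^-(\mathbf{x}),\mathbf{x}/|\mathbf{x}|\rangle<-c_7|\mathbf{F}^-(\mathbf{x})|$ if $x\le0$, $\langle\mathbf{F}^+(\mathbf{x}),\mathbf{x}/|\mathbf{x}|\rangle<-c_7|\mathbf{F}^+(\mathbf{x})|$ if $x\ge0$. Mollification: let $\zeta:\mathbb{R}\to\mathbb{R}$ be a smooth, even, nonnegative function supported in $[-1,1]$ with $\int_{\mathbb{R}}\zeta=1$ (e.g. $\zeta(x)=C\exp(1/(x^2-1))$ for $|x|<1$, $0$ otherwise). For $\varepsilon>0$ set $\zeta_\varepsilon(x)=\zeta(x/\varepsilon)/\varepsilon$, and define the mollified field \[ \mathbf{F}^{\varepsilon}(x,\mathbf{y})=\int_{-\varepsilon}^{\varepsilon}\zeta_\varepsilon(u)\Big(\mathbf{F}^-(x-u,\mathbf{y})\mathbb{1}_{\{u\ge x\}}+\mathbf{F}^+(x-u,\mathbf{y})\mathbb{1}_{\{u\le x\}}\Big)\,du . \] *)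

theory Defs
  imports "HOL-Analysis.Analysis"
begin

fun iter_dderiv :: "'a::real_normed_vector list \<Rightarrow> ('a \<Rightarrow> 'b::real_normed_vector) \<Rightarrow> 'a \<Rightarrow> 'b" where
  "iter_dderiv [] f = f"
| "iter_dderiv (v # vs) f = (\<lambda>x. frechet_derivative (iter_dderiv vs f) (at x) v)"

definition smooth_map :: "('a::real_normed_vector \<Rightarrow> 'b::real_normed_vector) \<Rightarrow> bool" where
  "smooth_map f \<longleftrightarrow> (\<forall>vs x. iter_dderiv vs f differentiable (at x))"

definition partial_x :: "(real \<times> 'a::real_normed_vector \<Rightarrow> 'b::real_normed_vector) \<Rightarrow> real \<times> 'a \<Rightarrow> 'b" where
  "partial_x F p = frechet_derivative F (at p) (1, 0)"

definition mollified :: "(real \<Rightarrow> real) \<Rightarrow> real \<Rightarrow> (real \<times> 'a \<Rightarrow> real \<times> 'a) \<Rightarrow>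
    (real \<times> 'a \<Rightarrow> real \<times> 'a) \<Rightarrow> real \<times> 'a \<Rightarrow> real \<times> ('a::euclidean_space)" where
  "mollified \<zeta> \<epsilon> Fm Fp p = (case p of (x, y) \<Rightarrow>
     integral {-\<epsilon>..\<epsilon>} (\<lambda>u. (\<zeta> (u / \<epsilon>) / \<epsilon>) *\<^sub>R
        ((if u \<ge> x then Fm (x - u, y) else 0) + (if u \<le> x then Fp (x - u, y) else 0))))"

end

theory Submission
  imports Defs
begin

lemma smooth_cont: "smooth_map f \<Longrightarrow> continuous_on S f"
proof -
  assume "smooth_map f"
  then have "\<And>x. f differentiable (at x)"
    unfolding smooth_map_def by (metis iter_dderiv.simps(1))
  then have "\<And>x. isCont f x" by (rule differentiable_imp_continuous_within)
  then show ?thesis by (simp add: continuous_at_imp_continuous_on)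
qed

lemma sgn_diff:
  fixes z w :: "'b::real_normed_vector"
  assumes "z \<noteq> 0" "w \<noteq> 0"
  shows "norm (z /\<^sub>R norm z - w /\<^sub>R norm w) \<le> 2 * norm (z - w) / norm z"
proof -
  have "z /\<^sub>R norm z - w /\<^sub>R norm w = (z - w) /\<^sub>R norm z + (w /\<^sub>R norm z - w /\<^sub>R norm w)"
    by (simp add: algebra_simps)
  also have "norm \<dots> \<le> norm (z - w) / norm z + norm (w /\<^sub>R norm z - w /\<^sub>R norm w)"
    using norm_triangle_ineq[of "(z - w) /\<^sub>R norm z" "w /\<^sub>R norm z - w /\<^sub>R norm w"]
    by (simp add: divide_inverse_commute)
  also have "w /\<^sub>R norm z - w /\<^sub>R norm w = ((norm w - norm z) / norm z) *\<^sub>R (w /\<^sub>R norm w)"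
  proof -
    have "w /\<^sub>R norm z - w /\<^sub>R norm w = (inverse (norm z) - inverse (norm w)) *\<^sub>R w"
      by (simp add: scaleR_diff_left)
    also have "inverse (norm z) - inverse (norm w) = ((norm w - norm z) / norm z) * inverse (norm w)"
      using assms by (simp add: field_simps)
    finally show ?thesis by simp
  qed
  also have "norm \<dots> = \<bar>norm w - norm z\<bar> / norm z"
    using assms by (simp add: abs_mult field_simps)
  also have "\<bar>norm w - norm z\<bar> \<le> norm (z - w)"
    by (metis norm_triangle_ineq3 norm_minus_commute)
  finally show ?thesis
    using assms by (simp add: divide_right_mono add_divide_distrib[symmetric])
qed

lemma zeta_scaled:
  fixes \<zeta> :: "real \<Rightarrow> real"
  assumes "(\<zeta> has_integral 1) UNIV" "\<And>t. \<bar>t\<bar> > 1 \<Longrightarrow> \<zeta> t = 0" "e > 0"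
  shows "((\<lambda>u. \<zeta> (u / e) / e) has_integral 1) {-e..e}"
proof -
  have eq: "\<zeta> = (\<lambda>x. if x \<in> {-1..1} then \<zeta> x else 0)"
    using assms(2) by (auto simp: fun_eq_iff abs_if)
  have "((\<lambda>x. if x \<in> {-1..1} then \<zeta> x else 0) has_integral 1) UNIV"
    using assms(1) eq by metis
  then have "(\<zeta> has_integral 1) {-1..1}"
    by (simp only: has_integral_restrict_UNIV)
  from has_integral_stretch_real[OF this, of "1/e"] assms(3)
  have "((\<lambda>x. \<zeta> (x / e)) has_integral e) ((\<lambda>x. x * e) ` {-1..1})"
    by simp
  moreover have "(\<lambda>x. x * e) ` {-1..1} = {-e..e}"
  proof (rule set_eqI, rule iffI)
    fix t assume "t \<in> (\<lambda>x. x * e) ` {-1..1}"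
    then obtain s where s: "\<bar>s\<bar> \<le> 1" "t = s * e" by (auto simp: abs_le_iff)
    have "\<bar>t\<bar> \<le> e" using s assms(3) mult_right_mono[of "\<bar>s\<bar>" 1 e] by (simp add: abs_mult)
    then show "t \<in> {-e..e}" by (simp add: abs_le_iff)
  next
    fix t assume t: "t \<in> {-e..e}"
    have "\<bar>t / e\<bar> \<le> 1" using t assms(3) by (simp add: abs_le_iff field_simps)
    moreover have "t = (t / e) * e" using assms(3) by simp
    ultimately show "t \<in> (\<lambda>x. x * e) ` {-1..1}"
      by (metis (no_types, lifting) abs_le_iff atLeastAtMost_iff image_eqI minus_le_iff)
  qed
  ultimately have "((\<lambda>x. \<zeta> (x / e)) has_integral e) {-e..e}" by simp
  from has_integral_mult_left[OF this, of "1/e"] assms(3)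
  show ?thesis by simp
qed

lemma int_piece:
  fixes h :: "real \<Rightarrow> 'b::euclidean_space"
  assumes "continuous_on UNIV h"
  shows "(\<lambda>u. if x \<le> u then h u else 0) integrable_on {a..b}"
    and "(\<lambda>u. if u \<le> x then h u else 0) integrable_on {a..b}"
proof -
  have "h integrable_on ({x..} \<inter> {a..b})"
    using assms by (auto simp: max_def intro!: integrable_continuous_interval continuous_on_subset[OF assms])
  then have "(\<lambda>u. if u \<in> {x..} then h u else 0) integrable_on {a..b}"
    by (simp only: integrable_restrict_Int)
  then show "(\<lambda>u. if x \<le> u then h u else 0) integrable_on {a..b}" by simp
  have "h integrable_on ({..x} \<inter> {a..b})"
    using assms by (auto simp: min_def intro!: integrable_continuous_interval continuous_on_subset[OF assms])
  then have "(\<lambda>u. if u \<in> {..x} then h u else 0) integrable_on {a..b}"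
    by (simp only: integrable_restrict_Int)
  then show "(\<lambda>u. if u \<le> x then h u else 0) integrable_on {a..b}" by simp
qed

lemma core:
  fixes F w z :: "'b::real_inner"
  assumes c7: "c7 > 0" and e: "e > 0" and zl: "norm z \<ge> 4 * e / c7" and wz: "norm (w - z) \<le> e"
    and w0: "w \<noteq> 0" and inw: "inner F (w /\<^sub>R norm w) < - c7 * norm F" and F1: "norm F \<ge> 1"
  shows "inner F (z /\<^sub>R norm z) + c7 / 4 * norm F \<le> - (c7 / 4)"
proof -
  have zpos: "norm z > 0" using zl e c7
    by (smt (verit) divide_pos_pos)
  then have z0: "z \<noteq> 0" by auto
  have "norm (z /\<^sub>R norm z - w /\<^sub>R norm w) \<le> 2 * norm (z - w) / norm z"
    by (rule sgn_diff[OF z0 w0])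
  also have "\<dots> \<le> 2 * e / (4 * e / c7)"
    using wz zl zpos e c7 by (intro frac_le) (auto simp: norm_minus_commute)
  also have "\<dots> = c7 / 2" using e c7 by (simp add: field_simps)
  finally have d: "norm (z /\<^sub>R norm z - w /\<^sub>R norm w) \<le> c7 / 2" .
  have eq: "inner F (z /\<^sub>R norm z) = inner F (w /\<^sub>R norm w) + inner F (z /\<^sub>R norm z - w /\<^sub>R norm w)"
    by (simp add: inner_diff_right)
  have le: "inner F (z /\<^sub>R norm z - w /\<^sub>R norm w) \<le> norm F * (c7 / 2)"
    using Cauchy_Schwarz_ineq2[of F "z /\<^sub>R norm z - w /\<^sub>R norm w"] d
    by (smt (verit) mult_left_mono norm_ge_zero abs_le_iff)
  have m: "c7 * norm F \<ge> c7" using F1 c7 mult_left_mono[OF F1, of c7] by simp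
  show ?thesis using eq le inw m by (simp add: algebra_simps)
qed

lemma grow1:
  fixes r c1 c2 p :: real
  assumes "c1 > 0" "p > 1" "r \<ge> 1 + \<bar>1 - c2\<bar> / c1"
  shows "c1 * r powr p + c2 \<ge> 1"
proof -
  have r1: "r \<ge> 1" using assms by (smt (verit) divide_nonneg_pos abs_ge_zero)
  have "r powr 1 \<le> r powr p" using r1 assms by (intro powr_mono) auto
  then have "r \<le> r powr p" using r1 by simp
  moreover have "c1 * r \<ge> c1 + \<bar>1 - c2\<bar>"
    using assms mult_left_mono[OF assms(3), of c1] by (simp add: field_simps)
  ultimately have "c1 * r powr p \<ge> c1 + \<bar>1 - c2\<bar>"
    using assms(1) by (smt (verit) mult_left_mono)
  then show ?thesis using assms(1) by linarith
qed

theorem lemma3p2: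
  fixes Fm Fp :: "real \<times> 'a::euclidean_space \<Rightarrow> real \<times> 'a"
    and \<zeta> :: "real \<Rightarrow> real"
    and p R1 c1 c2 c3 c4 c5 c6 R2 c7 :: real
  assumes smooth_m: "smooth_map Fm" and smooth_p: "smooth_map Fp"
    \<comment> \<open>(A1) growth\<close>
    and p: "1 < p" and R1: "R1 > 0" and c1: "c1 > 0" and c3: "c3 > 0" and c5: "c5 > 0"
    and c51: "c5 < c1"
    and grow_m: "\<And>x y. norm (x, y) > R1 \<Longrightarrow> x < 0 \<Longrightarrow> norm (Fm (x, y)) \<ge> c1 * norm (x, y) powr p + c2"
    and grow_p: "\<And>x y. norm (x, y) > R1 \<Longrightarrow> x > 0 \<Longrightarrow> norm (Fp (x, y)) \<ge> c1 * norm (x, y) powr p + c2"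
    and dx_m: "\<And>x y. norm (x, y) > R1 \<Longrightarrow> x < 0 \<Longrightarrow> norm (partial_x Fm (x, y)) \<le> c3 * norm (x, y) powr p + c4"
    and dx_p: "\<And>x y. norm (x, y) > R1 \<Longrightarrow> x > 0 \<Longrightarrow> norm (partial_x Fp (x, y)) \<le> c3 * norm (x, y) powr p + c4"
    and jump: "\<And>y. norm ((0::real), y) > R1 \<Longrightarrow> norm (Fp (0, y) - Fm (0, y)) \<le> c5 * norm y powr p + c6"
    \<comment> \<open>(A2) asymptotically inward-flowing\<close>
    and R2: "R2 > 0" and c7: "c7 > 0"
    and nz: "\<And>z. norm z > R2 \<Longrightarrow> Fm z \<noteq> 0 \<and> Fp z \<noteq> 0"
    and inw_m: "\<And>x y. norm (x, y) > R2 \<Longrightarrow> x \<le> 0 \<Longrightarrow>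
       inner (Fm (x, y)) ((x, y) /\<^sub>R norm (x, y)) < - c7 * norm (Fm (x, y))"
    and inw_p: "\<And>x y. norm (x, y) > R2 \<Longrightarrow> x \<ge> 0 \<Longrightarrow>
       inner (Fp (x, y)) ((x, y) /\<^sub>R norm (x, y)) < - c7 * norm (Fp (x, y))"
    \<comment> \<open>mollifier\<close>
    and zeta_smooth: "smooth_map \<zeta>"
    and zeta_even: "\<And>t. \<zeta> (- t) = \<zeta> t"
    and zeta_nonneg: "\<And>t. \<zeta> t \<ge> 0"
    and zeta_supp: "\<And>t. \<bar>t\<bar> > 1 \<Longrightarrow> \<zeta> t = 0"
    and zeta_int: "(\<zeta> has_integral 1) UNIV"
  shows "\<forall>\<epsilon>>0. \<exists>R2e>0. \<exists>c7e>0. \<forall>z. norm z > R2e \<longrightarrow>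
           mollified \<zeta> \<epsilon> Fm Fp z \<noteq> 0 \<and>
           inner (mollified \<zeta> \<epsilon> Fm Fp z) (z /\<^sub>R norm z) < - c7e * norm (mollified \<zeta> \<epsilon> Fm Fp z)"
  proof (intro allI impI)
  fix e :: real assume e: "e > 0"
  define zf where "zf u = \<zeta> (u / e) / e" for u
  have zf_int: "(zf has_integral 1) {-e..e}"
    unfolding zf_def by (rule zeta_scaled[OF zeta_int zeta_supp e])
  have zf_nn: "\<And>u. zf u \<ge> 0" using zeta_nonneg e by (simp add: zf_def)
  have zc: "continuous_on UNIV \<zeta>" by (rule smooth_cont[OF zeta_smooth])
  have zd: "continuous_on UNIV (\<lambda>u::real. u / e)" using e by (intro continuous_intros) auto
  have zc2: "continuous_on UNIV (\<lambda>u. \<zeta> (u / e))"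
    by (rule continuous_on_compose2[OF zc zd]) auto
  have zf_cont: "continuous_on UNIV zf"
    unfolding zf_def using e by (intro continuous_on_divide[OF zc2 continuous_on_const]) auto
  have Fm_cont: "continuous_on UNIV Fm" by (rule smooth_cont[OF smooth_m])
  have Fp_cont: "continuous_on UNIV Fp" by (rule smooth_cont[OF smooth_p])
  define M where "M = R1 + R2 + e + 4 * e / c7 + 2 + \<bar>1 - c2\<bar> / c1"
  have nn1: "4 * e / c7 \<ge> 0" using e c7 by simp
  have nn2: "\<bar>1 - c2\<bar> / c1 \<ge> 0" using c1 by simp
  have Mpos: "M > 0" unfolding M_def using R1 R2 e nn1 nn2 by linarith
  show "\<exists>R2e>0. \<exists>c7e>0. \<forall>z. norm z > R2e \<longrightarrow>
           mollified \<zeta> e Fm Fp z \<noteq> 0 \<and>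
           inner (mollified \<zeta> e Fm Fp z) (z /\<^sub>R norm z) < - c7e * norm (mollified \<zeta> e Fm Fp z)"
  proof (rule exI[of _ M], rule conjI[OF Mpos], rule exI[of _ "c7/4"], rule conjI)
    show "c7 / 4 > 0" using c7 by simp
  next
    show "\<forall>z. norm z > M \<longrightarrow>
           mollified \<zeta> e Fm Fp z \<noteq> 0 \<and>
           inner (mollified \<zeta> e Fm Fp z) (z /\<^sub>R norm z) < - (c7/4) * norm (mollified \<zeta> e Fm Fp z)"
    proof (intro allI impI)
    fix z :: "real \<times> 'a" assume zM: "norm z > M"
    obtain x y where z: "z = (x, y)" by (cases z)
    define zh where "zh = z /\<^sub>R norm z"
    define Fi where "Fi u = (if x \<le> u then zf u *\<^sub>R Fm (x - u, y) else 0)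
        + (if u \<le> x then zf u *\<^sub>R Fp (x - u, y) else 0)" for u
    define g where "g u = (if x \<le> u then zf u * norm (Fm (x - u, y)) else 0)
        + (if u \<le> x then zf u * norm (Fp (x - u, y)) else 0)" for u
    have mol: "mollified \<zeta> e Fm Fp z = integral {-e..e} Fi"
    proof -
      have "(\<lambda>u. (\<zeta> (u / e) / e) *\<^sub>R ((if x \<le> u then Fm (x - u, y) else 0)
            + (if u \<le> x then Fp (x - u, y) else 0))) = Fi"
        by (auto simp: fun_eq_iff Fi_def zf_def scaleR_add_right)
      then show ?thesis by (simp add: mollified_def z)
    qed
    have pc: "continuous_on UNIV (\<lambda>u::real. (x - u, y))"
      by (intro continuous_on_Pair continuous_on_diff continuous_on_const continuous_on_id)
    have Fmc: "continuous_on UNIV (\<lambda>u. Fm (x - u, y))"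
      by (rule continuous_on_compose2[OF Fm_cont pc]) auto
    have Fpc: "continuous_on UNIV (\<lambda>u. Fp (x - u, y))"
      by (rule continuous_on_compose2[OF Fp_cont pc]) auto
    have cm: "continuous_on UNIV (\<lambda>u. zf u *\<^sub>R Fm (x - u, y))"
      by (rule continuous_on_scaleR[OF zf_cont Fmc])
    have cp: "continuous_on UNIV (\<lambda>u. zf u *\<^sub>R Fp (x - u, y))"
      by (rule continuous_on_scaleR[OF zf_cont Fpc])
    have cm': "continuous_on UNIV (\<lambda>u. zf u * norm (Fm (x - u, y)))"
      by (rule continuous_on_mult[OF zf_cont continuous_on_norm[OF Fmc]])
    have cp': "continuous_on UNIV (\<lambda>u. zf u * norm (Fp (x - u, y)))"
      by (rule continuous_on_mult[OF zf_cont continuous_on_norm[OF Fpc]])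
    have int_F: "Fi integrable_on {-e..e}"
      unfolding Fi_def by (rule integrable_add[OF int_piece(1)[OF cm] int_piece(2)[OF cp]])
    have int_g: "g integrable_on {-e..e}"
      unfolding g_def by (rule integrable_add[OF int_piece(1)[OF cm'] int_piece(2)[OF cp']])
    define A where "A u = inner (Fi u) zh" for u
    have int_A: "A integrable_on {-e..e}"
      using integrable_linear[OF int_F bounded_linear_inner_left[of zh]]
      unfolding A_def[abs_def] by (simp add: o_def)
    have iA: "integral {-e..e} A = inner (integral {-e..e} Fi) zh"
      using integral_linear[OF int_F bounded_linear_inner_left[of zh]]
      unfolding A_def[abs_def] by (simp add: o_def)
    have nb: "norm (integral {-e..e} Fi) \<le> integral {-e..e} g"
    proof (rule integral_norm_bound_integral[OF int_F int_g])
      fix u assume "u \<in> {-e..e}"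
      have "norm (Fi u) \<le> norm (if x \<le> u then zf u *\<^sub>R Fm (x - u, y) else 0)
          + norm (if u \<le> x then zf u *\<^sub>R Fp (x - u, y) else 0)"
        unfolding Fi_def by (rule norm_triangle_ineq)
      also have "\<dots> = g u" unfolding g_def using zf_nn[of u] by auto
      finally show "norm (Fi u) \<le> g u" .
    qed
    define q where "q u = A u + c7 / 4 * g u" for u
    define q' where "q' u = (if u = x then - (c7 / 4) * zf u else q u)" for u
    have int_cg: "(\<lambda>u. c7 / 4 * g u) integrable_on {-e..e}" using int_g c7 by simp
    have int_q: "q integrable_on {-e..e}"
      unfolding q_def by (rule integrable_add[OF int_A int_cg])
    have int_q': "q' integrable_on {-e..e}"
      by (rule integrable_spike[OF int_q, of "{x}"]) (auto simp: q'_def)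
    have iq: "integral {-e..e} q = integral {-e..e} q'"
      by (rule integral_spike[of "{x}"]) (auto simp: q'_def)
    have zn: "norm z > 0" using zM Mpos by linarith
    have pw: "q' u \<le> - (c7 / 4) * zf u" if u: "u \<in> {-e..e}" for u
    proof (cases "u = x")
      case True then show ?thesis by (simp add: q'_def)
    next
      case False
      define w where "w = (x - u, y)"
      have wz: "norm (w - z) = \<bar>u\<bar>" by (simp add: w_def z norm_Pair)
      have ue: "\<bar>u\<bar> \<le> e" using u by auto
      have "norm z \<le> norm w + norm (w - z)"
        using norm_triangle_ineq[of w "z - w"] by (simp add: norm_minus_commute)
      then have wl: "norm w \<ge> norm z - e" using wz ue by linarith
      then have wM: "norm w > M - e" using zM by linarith
      have wR1: "norm w > R1" and wR2: "norm w > R2"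
        and w1: "norm w \<ge> 1 + \<bar>1 - c2\<bar> / c1"
        using wM nn1 nn2 R1 R2 unfolding M_def by linarith+
      have w0: "w \<noteq> 0" using wR1 R1 by auto
      have zl: "norm z \<ge> 4 * e / c7" using zM nn1 nn2 R1 R2 e unfolding M_def by linarith
      have wze: "norm (w - z) \<le> e" using wz ue by simp
      have g1: "c1 * norm w powr p + c2 \<ge> 1" by (rule grow1[OF c1 p w1])
      show ?thesis
      proof (cases "x < u")
        case True
        have neg: "x - u < 0" using True by simp
        have F1: "norm (Fm w) \<ge> 1" using grow_m[of "x - u" y] wR1 neg g1 unfolding w_def by linarith
        have inw: "inner (Fm w) (w /\<^sub>R norm w) < - c7 * norm (Fm w)"
          using inw_m[of "x - u" y] wR2 neg unfolding w_def by simp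
        have c: "inner (Fm w) zh + c7 / 4 * norm (Fm w) \<le> - (c7 / 4)"
          unfolding zh_def by (rule core[OF c7 e zl wze w0 inw F1])
        have "q' u = inner (zf u *\<^sub>R Fm w) zh + c7 / 4 * (zf u * norm (Fm w))"
          using True False by (simp add: q'_def q_def A_def Fi_def g_def w_def)
        also have "\<dots> = zf u * (inner (Fm w) zh + c7 / 4 * norm (Fm w))"
          by (simp add: algebra_simps)
        also have "\<dots> \<le> zf u * (- (c7 / 4))" by (rule mult_left_mono[OF c zf_nn])
        finally show ?thesis by (simp add: algebra_simps)
      next
        case False2: False
        then have lt: "u < x" using False by simp
        have pos: "x - u > 0" using lt by simp
        have F1: "norm (Fp w) \<ge> 1" using grow_p[of "x - u" y] wR1 pos g1 unfolding w_def by linarith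
        have inw: "inner (Fp w) (w /\<^sub>R norm w) < - c7 * norm (Fp w)"
          using inw_p[of "x - u" y] wR2 pos unfolding w_def by simp
        have c: "inner (Fp w) zh + c7 / 4 * norm (Fp w) \<le> - (c7 / 4)"
          unfolding zh_def by (rule core[OF c7 e zl wze w0 inw F1])
        have "q' u = inner (zf u *\<^sub>R Fp w) zh + c7 / 4 * (zf u * norm (Fp w))"
          using lt False by (simp add: q'_def q_def A_def Fi_def g_def w_def)
        also have "\<dots> = zf u * (inner (Fp w) zh + c7 / 4 * norm (Fp w))"
          by (simp add: algebra_simps)
        also have "\<dots> \<le> zf u * (- (c7 / 4))" by (rule mult_left_mono[OF c zf_nn])
        finally show ?thesis by (simp add: algebra_simps)
      qed
    qed
    have "integral {-e..e} q' \<le> integral {-e..e} (\<lambda>u. - (c7 / 4) * zf u)"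
      by (rule integral_le[OF int_q' _ pw]) (rule iffD2[OF integrable_on_cmult_iff has_integral_integrable[OF zf_int]], use c7 in simp)
    also have "\<dots> = - (c7 / 4)"
      using integral_unique[OF has_integral_mult_right[OF zf_int, of "- (c7/4)"]] by simp
    finally have kq: "integral {-e..e} q \<le> - (c7 / 4)" using iq by simp
    have eqq: "integral {-e..e} q = integral {-e..e} A + c7 / 4 * integral {-e..e} g"
      unfolding q_def using int_A int_cg by (simp add: integral_add)
    have key: "inner (integral {-e..e} Fi) zh + c7 / 4 * norm (integral {-e..e} Fi) \<le> - (c7 / 4)"
    proof -
      have "c7 / 4 * norm (integral {-e..e} Fi) \<le> c7 / 4 * integral {-e..e} g"
        by (rule mult_left_mono[OF nb]) (use c7 in simp)
      then show ?thesis using kq eqq iA by linarith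
    qed
    have r1: "mollified \<zeta> e Fm Fp z \<noteq> 0"
    proof
      assume "mollified \<zeta> e Fm Fp z = 0"
      then show False using key mol c7 by simp
    qed
    have r2: "inner (mollified \<zeta> e Fm Fp z) (z /\<^sub>R norm z) < - (c7 / 4) * norm (mollified \<zeta> e Fm Fp z)"
      using key mol c7 unfolding zh_def by simp
    show "mollified \<zeta> e Fm Fp z \<noteq> 0 \<and>
           inner (mollified \<zeta> e Fm Fp z) (z /\<^sub>R norm z) < - (c7/4) * norm (mollified \<zeta> e Fm Fp z)"
      using r1 r2 by blast
    qed
  qed
qed

end
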